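(* Drop the abundance condition and assume instead only $\mu\ge1/n(\boldsymbol h)$. Then for every $\boldsymbol m\in[0,1]^2$ there is an equilibrium, and every equilibrium maximizes total output over feasible allocations. Moreover: (a) If $\boldsymbol m\in R_s\cup R_t$ or $\boldsymbol m\in R_b\cap K$, then the following is an equilibrium: $r^*=F(\boldsymbol m)$, $w^*=\max\{\bar w_s,\bar w_b,\bar w_t\}$, and the allocation is $\alpha_s^*=1,\mu_s^*=\mu$ if $\boldsymbol m\in R_s$; $\alpha_b^*=1,\mu_b^*=n(\boldsymbol m),\mu_s^*=\mu-n(\boldsymbol m)$ if $\boldsymbol m\in R_b\cap K$; $\alpha_t^*=1,\mu_t^*=1/n(\boldsymbol h),\mu_s^*=\mu-1/n(\boldsymbol h)$ if $\boldsymbol m\in R_t$. (b) If $\boldsymbol m\in R_b\cap K^c\cap R_m$, then only $b$ and $t$ firms form: $\alpha_b^*+\alpha_t^*=1$, $\mu_b^*+\mu_t^*=\mu$ with $\mu_b^*=\alpha_b^*n(\boldsymbol m)$, $\mu_t^*=\alpha_t^*/n(\boldsymbol h)$, and the prices are $r^*=F(\boldsymbol m)+\frac{n(\boldsymbol h)(\bar w_b-\bar w_t)}{n(\boldsymbol m)n(\boldsymbol h)-1}$, $w^*=\bar w_b-\frac{n(\boldsymbol m)n(\boldsymbol h)(\bar w_b-\bar w_t)}{n(\boldsymbol m)n(\boldsymbol h)-1}$. (c) If $\boldsymbol m\in R_b\cap K^c\cap R_m^c$, then only $b$ and single-layer non-automated firms form: $\alpha_b^*=\mu/n(\boldsymbol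 m)$, $\alpha_s^*=1-\alpha_b^*$, $\mu_b^*=\mu$, with prices $r^*=F(\boldsymbol m\vee\boldsymbol h)-F(\boldsymbol h)/n(\boldsymbol m)$ and $w^*=F(\boldsymbol h)$.
   Context: Fix a cumulative distribution function $F$ on $[0,1]^2$ with a density $f$ that has full support on $[0,1]^2$; a problem $\boldsymbol x$ is drawn from $F$. Fix $c\in(0,1)$, human knowledge $\boldsymbol h\in(0,1)^2$ (unit mass of humans, one unit of time each), and a mass $\mu>0$ of machines with common knowledge $\boldsymbol m\in[0,1]^2$ (one unit of time each). Write $\boldsymbol x\vee\boldsymbol y$ for the componentwise maximum and, for $F(\boldsymbol x)<1$, $n(\boldsymbol x)=\frac{1}{c(1-F(\boldsymbol x))}$. Given wage $w\ge0$ and rental rate $r\ge0$, firm types and profits: single-layer non-automated $F(\boldsymbol h)-w$; single-layer automated $F(\boldsymbol m)-r$; bottom-automated $b$ (one human solver, $n(\boldsymbol m)$ machine workers; available only when $F(\boldsymbol m)<1$) $\Pi_b=n(\boldsymbol m)[F(\boldsymbol m\vee\boldsymbol h)-r]-w$; top-automated $t$ (one machine solver, $n(\boldsymbol h)$ human workers) $\Pi_t=n(\boldsymbol h)[F(\boldsymbol m\vee\boldsymbol h)-w]-r$. A feasible allocation is $(\alpha_s,\alpha_b,\alpha_t,\mu_s,\mu_b,\mu_t)\ge0$ with $\mu_b=\alpha_bn(\boldsymbol m)$, $\mu_t=\alpha_t/n(\boldsymbol h)$, $\alpha_s+\alpha_b+\alpha_t=1$, $\mu_s+\mu_b+\mu_t=\mu$;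 total output $Y=\alpha_bn(\boldsymbol m)F(\boldsymbol m\vee\boldsymbol h)+\alpha_tF(\boldsymbol m\vee\boldsymbol h)+\alpha_sF(\boldsymbol h)+\mu_sF(\boldsymbol m)$. An equilibrium is a feasible allocation and prices $(w,r)\ge0$ such that all firm types have nonpositive profit and types used with positive mass earn zero profit. Define $\bar w_s=F(\boldsymbol h)$, $\bar w_b=n(\boldsymbol m)(F(\boldsymbol m\vee\boldsymbol h)-F(\boldsymbol m))$ (with $\bar w_b:=0$ if $F(\boldsymbol m)=1$), $\bar w_t=F(\boldsymbol m\vee\boldsymbol h)-F(\boldsymbol m)/n(\boldsymbol h)$; $R_s=\{\boldsymbol m:\bar w_s\ge\max\{\bar w_b,\bar w_t\}\}$, $R_b=\{\boldsymbol m:\bar w_b>\max\{\bar w_s,\bar w_t\}\}$, $R_t=[0,1]^2\setminus(R_s\cup R_b)$; $K=\{\boldsymbol m\in[0,1]^2:F(\boldsymbol m)<1,\ \mu\ge n(\boldsymbol m)\}$; $R_m=\{\boldsymbol m\in[0,1]^2:\bar w_b-\bar w_s\le n(\boldsymbol m)n(\boldsymbol h)(\bar w_t-\bar w_s)\}$. Complements are taken in $[0,1]^2$. *)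

theory Defs
  imports "HOL-Analysis.Analysis"
begin

definition unitsq :: "(real \<times> real) set" where
  "unitsq = {0..1} \<times> {0..1}"

definition vmax :: "real \<times> real \<Rightarrow> real \<times> real \<Rightarrow> real \<times> real" where
  "vmax x y = (max (fst x) (fst y), max (snd x) (snd y))"

text \<open>n(x) = 1 / (c (1 - F x)), used only when F x < 1.\<close>
definition nn :: "real \<Rightarrow> (real \<times> real \<Rightarrow> real) \<Rightarrow> real \<times> real \<Rightarrow> real" where
  "nn c F x = 1 / (c * (1 - F x))"

record alloc =
  a_s :: real
  a_b :: real
  a_t :: real
  m_s :: real
  m_b :: real
  m_t :: real

definition prof_s :: "(real \<times> real \<Rightarrow> real) \<Rightarrow> real \<times> real \<Rightarrow> real \<Rightarrow> real" where
  "prof_s F h w = F h - w"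

definition prof_a :: "(real \<times> real \<Rightarrow> real) \<Rightarrow> real \<times> real \<Rightarrow> real \<Rightarrow> real" where
  "prof_a F m r = F m - r"

definition prof_b :: "real \<Rightarrow> (real \<times> real \<Rightarrow> real) \<Rightarrow> real \<times> real \<Rightarrow> real \<times> real \<Rightarrow> real \<Rightarrow> real \<Rightarrow> real" where
  "prof_b c F h m w r = nn c F m * (F (vmax m h) - r) - w"

definition prof_t :: "real \<Rightarrow> (real \<times> real \<Rightarrow> real) \<Rightarrow> real \<times> real \<Rightarrow> real \<times> real \<Rightarrow> real \<Rightarrow> real \<Rightarrow> real" where
  "prof_t c F h m w r = nn c F h * (F (vmax m h) - w) - r"

text \<open>Feasible allocations. The bottom-automated type is only available when F m < 1,
  so it cannot be used (alpha_b = 0) when F m = 1.\<close>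
definition feasible :: "real \<Rightarrow> (real \<times> real \<Rightarrow> real) \<Rightarrow> real \<times> real \<Rightarrow> real \<Rightarrow> real \<times> real \<Rightarrow> alloc \<Rightarrow> bool" where
  "feasible c F h \<mu> m A \<longleftrightarrow>
     a_s A \<ge> 0 \<and> a_b A \<ge> 0 \<and> a_t A \<ge> 0 \<and> m_s A \<ge> 0 \<and> m_b A \<ge> 0 \<and> m_t A \<ge> 0 \<and>
     (F m \<ge> 1 \<longrightarrow> a_b A = 0) \<and>
     m_b A = a_b A * nn c F m \<and> m_t A = a_t A / nn c F h \<and>
     a_s A + a_b A + a_t A = 1 \<and> m_s A + m_b A + m_t A = \<mu>"

definition total_output :: "real \<Rightarrow> (real \<times> real \<Rightarrow> real) \<Rightarrow> real \<times> real \<Rightarrow> real \<times> real \<Rightarrow> alloc \<Rightarrow> real" where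
  "total_output c F h m A =
     a_b A * nn c F m * F (vmax m h) + a_t A * F (vmax m h) + a_s A * F h + m_s A * F m"

definition equilibrium ::
  "real \<Rightarrow> (real \<times> real \<Rightarrow> real) \<Rightarrow> real \<times> real \<Rightarrow> real \<Rightarrow> real \<times> real \<Rightarrow> alloc \<Rightarrow> real \<Rightarrow> real \<Rightarrow> bool" where
  "equilibrium c F h \<mu> m A w r \<longleftrightarrow>
     feasible c F h \<mu> m A \<and> w \<ge> 0 \<and> r \<ge> 0 \<and>
     prof_s F h w \<le> 0 \<and> prof_a F m r \<le> 0 \<and>
     (F m < 1 \<longrightarrow> prof_b c F h m w r \<le> 0) \<and> prof_t c F h m w r \<le> 0 \<and>
     (a_s A > 0 \<longrightarrow> prof_s F h w = 0) \<and> (m_s A > 0 \<longrightarrow> prof_a F m r = 0) \<and>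
     (a_b A > 0 \<longrightarrow> prof_b c F h m w r = 0) \<and> (a_t A > 0 \<longrightarrow> prof_t c F h m w r = 0)"

definition wbar_s :: "(real \<times> real \<Rightarrow> real) \<Rightarrow> real \<times> real \<Rightarrow> real" where
  "wbar_s F h = F h"

definition wbar_b :: "real \<Rightarrow> (real \<times> real \<Rightarrow> real) \<Rightarrow> real \<times> real \<Rightarrow> real \<times> real \<Rightarrow> real" where
  "wbar_b c F h m = (if F m = 1 then 0 else nn c F m * (F (vmax m h) - F m))"

definition wbar_t :: "real \<Rightarrow> (real \<times> real \<Rightarrow> real) \<Rightarrow> real \<times> real \<Rightarrow> real \<times> real \<Rightarrow> real" where
  "wbar_t c F h m = F (vmax m h) - F m / nn c F h"

definition R_s :: "real \<Rightarrow> (real \<times> real \<Rightarrow> real) \<Rightarrow> real \<times> real \<Rightarrow> (real \<times> real) set" where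
  "R_s c F h = {m \<in> unitsq. wbar_s F h \<ge> max (wbar_b c F h m) (wbar_t c F h m)}"

definition R_b :: "real \<Rightarrow> (real \<times> real \<Rightarrow> real) \<Rightarrow> real \<times> real \<Rightarrow> (real \<times> real) set" where
  "R_b c F h = {m \<in> unitsq. wbar_b c F h m > max (wbar_s F h) (wbar_t c F h m)}"

definition R_t :: "real \<Rightarrow> (real \<times> real \<Rightarrow> real) \<Rightarrow> real \<times> real \<Rightarrow> (real \<times> real) set" where
  "R_t c F h = unitsq - (R_s c F h \<union> R_b c F h)"

definition K_set :: "real \<Rightarrow> (real \<times> real \<Rightarrow> real) \<Rightarrow> real \<Rightarrow> (real \<times> real) set" where
  "K_set c F \<mu> = {m \<in> unitsq. F m < 1 \<and> \<mu> \<ge> nn c F m}"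

definition R_m :: "real \<Rightarrow> (real \<times> real \<Rightarrow> real) \<Rightarrow> real \<times> real \<Rightarrow> (real \<times> real) set" where
  "R_m c F h = {m \<in> unitsq. wbar_b c F h m - wbar_s F h
                 \<le> nn c F m * nn c F h * (wbar_t c F h m - wbar_s F h)}"

end

theory Submission
  imports Defs
begin

lemma integral_pos_cbox:
  fixes f :: "real \<times> real \<Rightarrow> real"
  assumes fi: "f integrable_on cbox a b" and fp: "\<forall>x\<in>cbox a b. f x > 0"
    and ab: "\<forall>i\<in>Basis. a\<bullet>i < b\<bullet>i"
  shows "integral (cbox a b) f > 0"
proof -
  let ?M = "lebesgue_on (cbox a b)"
  have ai: "f absolutely_integrable_on cbox a b"
    using fi fp by (intro nonnegative_absolutely_integrable_1) (auto intro: less_imp_le)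
  have Mi: "integrable ?M f"
    by (rule absolutely_integrable_imp_integrable[OF ai]) auto
  have eq: "integral\<^sup>L ?M f = integral (cbox a b) f"
    by (rule lebesgue_integral_eq_integral[OF Mi]) auto
  have nn: "AE x in ?M. 0 \<le> f x"
    using fp by (intro AE_I2) (auto simp: space_restrict_space intro: less_imp_le)
  have ge: "integral (cbox a b) f \<ge> 0"
    using fp by (intro integral_nonneg[OF fi]) (auto intro: less_imp_le)
  have "integral (cbox a b) f \<noteq> 0"
  proof
    assume "integral (cbox a b) f = 0"
    then have "AE x in ?M. f x = 0"
      using integral_nonneg_eq_0_iff_AE[OF Mi nn] eq by simp
    then have "AE x in ?M. False"
      by (rule AE_mp) (use fp in \<open>fastforce intro!: AE_I2 simp: space_restrict_space\<close>)
    then have "emeasure ?M (space ?M) = 0"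
      using ae_filter_eq_bot_iff trivial_limit_def by metis
    moreover have "emeasure ?M (space ?M) = emeasure lebesgue (cbox a b)"
      by (subst emeasure_restrict_space) (auto simp: space_restrict_space)
    moreover have "emeasure lebesgue (cbox a b) > 0"
      using ab by (auto simp: emeasure_lborel_cbox_eq inner_diff_left intro!: prod_pos)
    ultimately show False by simp
  qed
  with ge show ?thesis by simp
qed

lemma unitsq_cbox: "unitsq = cbox (0,0) (1::real,1::real)"
  by (simp add: unitsq_def cbox_Pair_eq)

lemma F_facts:
  fixes F f :: "real \<times> real \<Rightarrow> real" and h :: "real \<times> real"
  assumes f_int: "f integrable_on unitsq"
      and f_pos: "\<forall>x\<in>unitsq. f x > 0"
      and f_mass: "integral unitsq f = 1"
      and F_def: "\<forall>x\<in>unitsq. F x = integral (cbox (0, 0) x) f"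
      and h: "h \<in> {0<..<1} \<times> {0<..<1}"
  shows "\<forall>x\<in>unitsq. 0 \<le> F x \<and> F x \<le> 1" "0 \<le> F h" "F h < 1"
proof -
  have sub: "cbox (0,0) x \<subseteq> unitsq" if "x \<in> unitsq" for x
    using that by (cases x) (auto simp: unitsq_def cbox_Pair_eq)
  have fi: "f integrable_on cbox (0,0) x" if "x \<in> unitsq" for x
    using integrable_on_subcbox[OF f_int sub[OF that]] .
  show A: "\<forall>x\<in>unitsq. 0 \<le> F x \<and> F x \<le> 1"
  proof
    fix x assume x: "x \<in> unitsq"
    have "0 \<le> integral (cbox (0,0) x) f"
      using fi[OF x] f_pos sub[OF x] by (intro integral_nonneg) (auto intro: less_imp_le)
    moreover have "integral (cbox (0,0) x) f \<le> integral unitsq f"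
      using fi[OF x] f_pos sub[OF x] f_int by (intro integral_subset_le) (auto intro: less_imp_le)
    ultimately show "0 \<le> F x \<and> F x \<le> 1" using F_def x f_mass by simp
  qed
  obtain h1 h2 where hh: "h = (h1, h2)" "0 < h1" "h1 < 1" "0 < h2" "h2 < 1" using h by auto
  have hu: "h \<in> unitsq" using hh by (auto simp: unitsq_def)
  then show "0 \<le> F h" using A by blast
  let ?B1 = "cbox (0::real,0::real) h" and ?B2 = "cbox (h1, 0::real) (1,1)"
  have B2u: "?B2 \<subseteq> unitsq" using hh by (auto simp: unitsq_def cbox_Pair_eq)
  have i1: "f integrable_on ?B1" using fi[OF hu] .
  have i2: "f integrable_on ?B2" using integrable_on_subcbox[OF f_int B2u] .
  have neg: "negligible (?B1 \<inter> ?B2)"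
  proof (rule negligible_subset)
    show "negligible {x. (1::real, 0::real) \<bullet> x = h1}"
      by (rule negligible_hyperplane) (simp add: zero_prod_def)
    show "?B1 \<inter> ?B2 \<subseteq> {x. (1::real, 0::real) \<bullet> x = h1}"
      using hh by (auto simp: cbox_Pair_eq inner_Pair)
  qed
  have pos: "integral ?B2 f > 0"
    using f_pos B2u hh by (intro integral_pos_cbox[OF i2]) (auto simp: Basis_prod_def)
  have "integral (?B1 \<union> ?B2) f = integral ?B1 f + integral ?B2 f"
    using i1 i2 neg by simp
  moreover have "integral (?B1 \<union> ?B2) f \<le> integral unitsq f"
    using i1 i2 neg f_pos f_int sub[OF hu] B2u
    by (intro integral_subset_le integrable_Un) (auto intro: less_imp_le)
  ultimately show "F h < 1" using pos F_def hu f_mass by simp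
qed

lemma nn_gt1:
  assumes "0 < c" "c < 1" "0 \<le> F x" "F x < 1"
  shows "nn c F x > 1"
proof -
  have "0 < c * (1 - F x)" using assms by simp
  moreover have "c * (1 - F x) < 1"
    using assms by (smt (verit) mult_left_le mult_less_cancel_left1)
  ultimately show ?thesis by (simp add: nn_def)
qed

lemma output_le:
  assumes fe: "feasible c F h \<mu> m A"
    and nh: "nn c F h > 0" and nm: "F m < 1 \<Longrightarrow> nn c F m > 0"
    and ps: "prof_s F h w \<le> 0" and pa: "prof_a F m r \<le> 0"
    and pb: "F m < 1 \<Longrightarrow> prof_b c F h m w r \<le> 0" and pt: "prof_t c F h m w r \<le> 0"
  shows "total_output c F h m A \<le> w + r * \<mu>"
proof -
  note f = fe[unfolded feasible_def]
  have s: "a_s A * F h \<le> a_s A * w" using ps f by (intro mult_left_mono) (auto simp: prof_s_def)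
  have a: "m_s A * F m \<le> m_s A * r" using pa f by (intro mult_left_mono) (auto simp: prof_a_def)
  have b: "a_b A * nn c F m * F (vmax m h) \<le> a_b A * w + m_b A * r"
  proof (cases "F m < 1")
    case True
    have "nn c F m * F (vmax m h) \<le> w + nn c F m * r"
      using pb[OF True] by (simp add: prof_b_def algebra_simps)
    then have "a_b A * (nn c F m * F (vmax m h)) \<le> a_b A * (w + nn c F m * r)"
      using f by (intro mult_left_mono) auto
    then show ?thesis using f by (simp add: algebra_simps)
  next
    case False then show ?thesis using f by auto
  qed
  have t: "a_t A * F (vmax m h) \<le> a_t A * w + m_t A * r"
  proof -
    have "F (vmax m h) \<le> w + r / nn c F h"
      using pt nh by (simp add: prof_t_def field_simps)
    then have "a_t A * F (vmax m h) \<le> a_t A * (w + r / nn c F h)"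
      using f by (intro mult_left_mono) auto
    then show ?thesis using f by (simp add: algebra_simps)
  qed
  have "total_output c F h m A \<le> a_s A * w + m_s A * r + (a_b A * w + m_b A * r) + (a_t A * w + m_t A * r)"
    unfolding total_output_def using s a b t by linarith
  also have "\<dots> = w * (a_s A + a_b A + a_t A) + r * (m_s A + m_b A + m_t A)"
    by (simp add: algebra_simps)
  also have "\<dots> = w + r * \<mu>" using f by simp
  finally show ?thesis .
qed

lemma output_eq:
  assumes eq: "equilibrium c F h \<mu> m A w r"
    and nh: "nn c F h > 0"
  shows "total_output c F h m A = w + r * \<mu>"
proof -
  note e = eq[unfolded equilibrium_def]
  note f = e[THEN conjunct1, unfolded feasible_def]
  have s: "a_s A * F h = a_s A * w"
  proof (cases "a_s A > 0")
    case True then show ?thesis using e by (simp add: prof_s_def)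
  next case False then show ?thesis using f by simp qed
  have a: "m_s A * F m = m_s A * r"
  proof (cases "m_s A > 0")
    case True then show ?thesis using e by (simp add: prof_a_def)
  next case False then show ?thesis using f by simp qed
  have b: "a_b A * nn c F m * F (vmax m h) = a_b A * w + m_b A * r"
  proof (cases "a_b A > 0")
    case True
    then have "nn c F m * F (vmax m h) = w + nn c F m * r"
      using e by (simp add: prof_b_def algebra_simps)
    then show ?thesis using f by (simp add: algebra_simps)
  next case False then show ?thesis using f by simp qed
  have t: "a_t A * F (vmax m h) = a_t A * w + m_t A * r"
  proof (cases "a_t A > 0")
    case True
    then have "nn c F h * (F (vmax m h) - w) = r" using e by (simp add: prof_t_def)
    then have "F (vmax m h) = w + r / nn c F h" using nh by (simp add: field_simps)
    then show ?thesis using f by (simp add: algebra_simps)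
  next case False then show ?thesis using f by simp qed
  have "total_output c F h m A = a_s A * w + m_s A * r + (a_b A * w + m_b A * r) + (a_t A * w + m_t A * r)"
    unfolding total_output_def using s a b t by linarith
  also have "\<dots> = w * (a_s A + a_b A + a_t A) + r * (m_s A + m_b A + m_t A)"
    by (simp add: algebra_simps)
  also have "\<dots> = w + r * \<mu>" using f by simp
  finally show ?thesis .
qed

theorem proposition5:
  fixes F f :: "real \<times> real \<Rightarrow> real" and c \<mu> :: real and h :: "real \<times> real"
  assumes f_int: "f integrable_on unitsq"
      and f_pos: "\<forall>x\<in>unitsq. f x > 0"
      and f_mass: "integral unitsq f = 1"
      and F_def: "\<forall>x\<in>unitsq. F x = integral (cbox (0, 0) x) f"
      and c: "0 < c" "c < 1"
      and h: "h \<in> {0<..<1} \<times> {0<..<1}"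
      and mu_pos: "\<mu> > 0"
      and mu_ge: "\<mu> \<ge> 1 / nn c F h"
  shows
    "(\<forall>m\<in>unitsq. \<exists>A w r. equilibrium c F h \<mu> m A w r)
   \<and> (\<forall>m\<in>unitsq. \<forall>A w r. equilibrium c F h \<mu> m A w r \<longrightarrow>
         (\<forall>A'. feasible c F h \<mu> m A' \<longrightarrow> total_output c F h m A' \<le> total_output c F h m A))
   \<and> (\<forall>m\<in>R_s c F h.
         equilibrium c F h \<mu> m
           \<lparr>a_s = 1, a_b = 0, a_t = 0, m_s = \<mu>, m_b = 0, m_t = 0\<rparr>
           (max (wbar_s F h) (max (wbar_b c F h m) (wbar_t c F h m))) (F m))
   \<and> (\<forall>m\<in>R_b c F h \<inter> K_set c F \<mu>.
         equilibrium c F h \<mu> m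
           \<lparr>a_s = 0, a_b = 1, a_t = 0, m_s = \<mu> - nn c F m, m_b = nn c F m, m_t = 0\<rparr>
           (max (wbar_s F h) (max (wbar_b c F h m) (wbar_t c F h m))) (F m))
   \<and> (\<forall>m\<in>R_t c F h.
         equilibrium c F h \<mu> m
           \<lparr>a_s = 0, a_b = 0, a_t = 1, m_s = \<mu> - 1 / nn c F h, m_b = 0, m_t = 1 / nn c F h\<rparr>
           (max (wbar_s F h) (max (wbar_b c F h m) (wbar_t c F h m))) (F m))
   \<and> (\<forall>m\<in>R_b c F h \<inter> (unitsq - K_set c F \<mu>) \<inter> R_m c F h.
         \<exists>A. a_s A = 0 \<and> m_s A = 0 \<and> a_b A + a_t A = 1 \<and> m_b A + m_t A = \<mu> \<and>
             m_b A = a_b A * nn c F m \<and> m_t A = a_t A / nn c F h \<and>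
             equilibrium c F h \<mu> m A
               (wbar_b c F h m - nn c F m * nn c F h * (wbar_b c F h m - wbar_t c F h m)
                                   / (nn c F m * nn c F h - 1))
               (F m + nn c F h * (wbar_b c F h m - wbar_t c F h m)
                                   / (nn c F m * nn c F h - 1)))
   \<and> (\<forall>m\<in>R_b c F h \<inter> (unitsq - K_set c F \<mu>) \<inter> (unitsq - R_m c F h).
         equilibrium c F h \<mu> m
           \<lparr>a_s = 1 - \<mu> / nn c F m, a_b = \<mu> / nn c F m, a_t = 0, m_s = 0, m_b = \<mu>, m_t = 0\<rparr>
           (F h) (F (vmax m h) - F h / nn c F m))"
proof -
  note FF = F_facts[OF f_int f_pos f_mass F_def h]
  have Fu: "\<And>x. x \<in> unitsq \<Longrightarrow> 0 \<le> F x \<and> F x \<le> 1" using FF(1) by blast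
  have Fh0: "0 \<le> F h" and Fh1: "F h < 1" using FF(2,3) by auto
  have nh1: "nn c F h > 1" using nn_gt1[of c F h, OF c Fh0 Fh1] .
  have nm1: "\<And>m. m \<in> unitsq \<Longrightarrow> F m < 1 \<Longrightarrow> nn c F m > 1" using nn_gt1[OF c] Fu by blast
  have Rb_lt1: "\<And>m. m \<in> R_b c F h \<Longrightarrow> F m < 1"
  proof -
    fix m assume m: "m \<in> R_b c F h"
    then have "m \<in> unitsq" by (simp add: R_b_def)
    then have "F m \<le> 1" using Fu by blast
    moreover have "F m \<noteq> 1" using m Fh0 by (auto simp: R_b_def wbar_b_def wbar_s_def)
    ultimately show "F m < 1" by simp
  qed
  have PS: "\<forall>m\<in>R_s c F h.
         equilibrium c F h \<mu> m
           \<lparr>a_s = 1, a_b = 0, a_t = 0, m_s = \<mu>, m_b = 0, m_t = 0\<rparr>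
           (max (wbar_s F h) (max (wbar_b c F h m) (wbar_t c F h m))) (F m)"
  proof
    fix m assume m: "m \<in> R_s c F h"
    have mu: "m \<in> unitsq" using m by (simp add: R_s_def)
    have w: "max (wbar_s F h) (max (wbar_b c F h m) (wbar_t c F h m)) = F h"
      using m by (auto simp: R_s_def wbar_s_def)
    have pb: "F m < 1 \<Longrightarrow> prof_b c F h m (F h) (F m) \<le> 0"
      using m by (auto simp: R_s_def wbar_s_def wbar_b_def prof_b_def)
    have "nn c F h * (F (vmax m h) - F h) - F m = nn c F h * (wbar_t c F h m - F h)"
      using nh1 by (simp add: wbar_t_def field_simps)
    also have "\<dots> \<le> 0" using m nh1 by (intro mult_nonneg_nonpos) (auto simp: R_s_def wbar_s_def)
    finally have pt: "prof_t c F h m (F h) (F m) \<le> 0" by (simp add: prof_t_def)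
    show "equilibrium c F h \<mu> m
           \<lparr>a_s = 1, a_b = 0, a_t = 0, m_s = \<mu>, m_b = 0, m_t = 0\<rparr>
           (max (wbar_s F h) (max (wbar_b c F h m) (wbar_t c F h m))) (F m)"
      unfolding w using pb pt Fh0 Fu[OF mu] mu_pos
      by (simp add: equilibrium_def feasible_def prof_s_def prof_a_def)
  qed
  have PB: "\<forall>m\<in>R_b c F h \<inter> K_set c F \<mu>.
         equilibrium c F h \<mu> m
           \<lparr>a_s = 0, a_b = 1, a_t = 0, m_s = \<mu> - nn c F m, m_b = nn c F m, m_t = 0\<rparr>
           (max (wbar_s F h) (max (wbar_b c F h m) (wbar_t c F h m))) (F m)"
  proof
    fix m assume m: "m \<in> R_b c F h \<inter> K_set c F \<mu>"
    have mu: "m \<in> unitsq" and lt: "F m < 1" using m Rb_lt1 by (auto simp: R_b_def)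
    have nm: "nn c F m > 1" using nm1[OF mu lt] .
    have wb: "wbar_b c F h m = nn c F m * (F (vmax m h) - F m)" using lt by (simp add: wbar_b_def)
    have w: "max (wbar_s F h) (max (wbar_b c F h m) (wbar_t c F h m)) = wbar_b c F h m"
      using m by (auto simp: R_b_def)
    have gt: "wbar_b c F h m > F h" "wbar_b c F h m > wbar_t c F h m"
      using m by (auto simp: R_b_def wbar_s_def)
    have "nn c F h * (F (vmax m h) - wbar_b c F h m) - F m = nn c F h * (wbar_t c F h m - wbar_b c F h m)"
      using nh1 by (simp add: wbar_t_def field_simps)
    also have "\<dots> \<le> 0" using gt nh1 by (intro mult_nonneg_nonpos) auto
    finally have pt: "prof_t c F h m (wbar_b c F h m) (F m) \<le> 0" by (simp add: prof_t_def)
    show "equilibrium c F h \<mu> m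
           \<lparr>a_s = 0, a_b = 1, a_t = 0, m_s = \<mu> - nn c F m, m_b = nn c F m, m_t = 0\<rparr>
           (max (wbar_s F h) (max (wbar_b c F h m) (wbar_t c F h m))) (F m)"
      unfolding w using pt Fh0 Fu[OF mu] gt lt nm m wb
      by (simp add: equilibrium_def feasible_def prof_s_def prof_a_def prof_b_def K_set_def)
  qed
  have PT: "\<forall>m\<in>R_t c F h.
         equilibrium c F h \<mu> m
           \<lparr>a_s = 0, a_b = 0, a_t = 1, m_s = \<mu> - 1 / nn c F h, m_b = 0, m_t = 1 / nn c F h\<rparr>
           (max (wbar_s F h) (max (wbar_b c F h m) (wbar_t c F h m))) (F m)"
  proof
    fix m assume m: "m \<in> R_t c F h"
    have mu: "m \<in> unitsq" using m by (simp add: R_t_def)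
    have ns: "\<not> F h \<ge> max (wbar_b c F h m) (wbar_t c F h m)"
      using m mu by (auto simp: R_t_def R_s_def wbar_s_def)
    have nb: "\<not> wbar_b c F h m > max (F h) (wbar_t c F h m)"
      using m mu by (auto simp: R_t_def R_b_def wbar_s_def)
    have le: "wbar_b c F h m \<le> wbar_t c F h m" "F h < wbar_t c F h m" using ns nb by auto
    have w: "max (wbar_s F h) (max (wbar_b c F h m) (wbar_t c F h m)) = wbar_t c F h m"
      using le by (auto simp: wbar_s_def)
    have pt: "prof_t c F h m (wbar_t c F h m) (F m) = 0"
      using nh1 by (simp add: prof_t_def wbar_t_def field_simps)
    have pb: "F m < 1 \<Longrightarrow> prof_b c F h m (wbar_t c F h m) (F m) \<le> 0"
      using le by (simp add: prof_b_def wbar_b_def)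
    have mt: "1 / nn c F h > 0" using nh1 by simp
    show "equilibrium c F h \<mu> m
           \<lparr>a_s = 0, a_b = 0, a_t = 1, m_s = \<mu> - 1 / nn c F h, m_b = 0, m_t = 1 / nn c F h\<rparr>
           (max (wbar_s F h) (max (wbar_b c F h m) (wbar_t c F h m))) (F m)"
      unfolding w using pt pb Fh0 Fu[OF mu] le mu_ge mt
      by (simp add: equilibrium_def feasible_def prof_s_def prof_a_def)
  qed
  have PM: "\<forall>m\<in>R_b c F h \<inter> (unitsq - K_set c F \<mu>) \<inter> R_m c F h.
         \<exists>A. a_s A = 0 \<and> m_s A = 0 \<and> a_b A + a_t A = 1 \<and> m_b A + m_t A = \<mu> \<and>
             m_b A = a_b A * nn c F m \<and> m_t A = a_t A / nn c F h \<and>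
             equilibrium c F h \<mu> m A
               (wbar_b c F h m - nn c F m * nn c F h * (wbar_b c F h m - wbar_t c F h m)
                                   / (nn c F m * nn c F h - 1))
               (F m + nn c F h * (wbar_b c F h m - wbar_t c F h m)
                                   / (nn c F m * nn c F h - 1))"
  proof
    fix m assume m: "m \<in> R_b c F h \<inter> (unitsq - K_set c F \<mu>) \<inter> R_m c F h"
    have mu: "m \<in> unitsq" and lt: "F m < 1" using m Rb_lt1 by (auto simp: R_b_def)
    define nm where "nm = nn c F m"
    define nh where "nh = nn c F h"
    define wb where "wb = wbar_b c F h m"
    define wt where "wt = wbar_t c F h m"
    define Fm where "Fm = F m"
    define Fh where "Fh = F h"
    define Fv where "Fv = F (vmax m h)"
    have nm: "nm > 1" unfolding nm_def using nm1[OF mu lt] .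
    have nh: "nh > 1" unfolding nh_def using nh1 .
    have muK: "\<mu> < nm" using m mu lt by (auto simp: K_set_def nm_def)
    have mug: "\<mu> \<ge> 1 / nh" using mu_ge by (simp add: nh_def)
    have wbd: "wb = nm * (Fv - Fm)" using lt by (simp add: wb_def wbar_b_def nm_def Fv_def Fm_def)
    have wtd: "wt = Fv - Fm / nh" by (simp add: wt_def wbar_t_def nh_def Fv_def Fm_def)
    have gt: "wb > Fh" "wb > wt" using m by (auto simp: R_b_def wbar_s_def wb_def wt_def Fh_def)
    have Rm: "wb - Fh \<le> nm * nh * (wt - Fh)"
      using m by (auto simp: R_m_def wbar_s_def wb_def wt_def Fh_def nm_def nh_def)
    define D where "D = nm * nh - 1"
    have D: "D > 0" unfolding D_def using nm nh by (smt (verit) mult_less_cancel_left2)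
    define w where "w = wb - nm * nh * (wb - wt) / D"
    define r where "r = Fm + nh * (wb - wt) / D"
    define ab where "ab = (\<mu> - 1 / nh) / (nm - 1 / nh)"
    have inh: "1 / nh < nm" using mug muK by simp
    have ab0: "ab \<ge> 0" unfolding ab_def using mug inh by simp
    have ab1: "ab < 1" unfolding ab_def using muK inh by simp
    define A where "A = \<lparr>a_s = 0, a_b = ab, a_t = 1 - ab, m_s = 0, m_b = ab * nm, m_t = (1 - ab) / nh\<rparr>"
    have sum: "ab * nm + (1 - ab) / nh = \<mu>"
    proof -
      have "ab * nm + (1 - ab) / nh = 1 / nh + ab * (nm - 1 / nh)" using nh by (simp add: field_simps)
      also have "\<dots> = \<mu>" unfolding ab_def using inh by simp
      finally show ?thesis .
    qed
    have wFh: "w - Fh = (nm * nh * (wt - Fh) - (wb - Fh)) / D"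
      unfolding w_def using D by (simp add: D_def field_simps)
    have "(nm * nh * (wt - Fh) - (wb - Fh)) / D \<ge> 0" using Rm D by simp
    then have wge: "w \<ge> Fh" using wFh by linarith
    have "nh * (wb - wt) / D > 0" using gt nh D by simp
    then have rge: "r \<ge> Fm" unfolding r_def by linarith
    have pb: "nm * (Fv - r) - w = 0"
    proof -
      have "nm * (Fv - r) = nm * (Fv - Fm) - nm * (nh * (wb - wt) / D)"
        unfolding r_def by (simp add: algebra_simps)
      also have "nm * (nh * (wb - wt) / D) = nm * nh * (wb - wt) / D" by simp
      finally show ?thesis unfolding w_def wbd by simp
    qed
    have pt: "nh * (Fv - w) - r = 0"
    proof -
      have k: "nm * nh * (wb - wt) / D = (wb - wt) + (wb - wt) / D"
        using D unfolding D_def by (simp add: field_simps)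
      have f1: "nh * Fv = nh * wt + Fm" unfolding wtd using nh by (simp add: field_simps)
      have "nh * (Fv - w) = nh * Fv - nh * wb + nh * (nm * nh * (wb - wt) / D)"
        unfolding w_def by (simp add: algebra_simps)
      also have "\<dots> = nh * wt + Fm - nh * wb + nh * ((wb - wt) + (wb - wt) / D)"
        unfolding k f1 ..
      also have "\<dots> = Fm + nh * (wb - wt) / D" by (simp add: algebra_simps)
      finally show ?thesis unfolding r_def by simp
    qed
    have Fm0: "Fm \<ge> 0" using Fu[OF mu] Fm_def by simp
    have "a_s A = 0 \<and> m_s A = 0 \<and> a_b A + a_t A = 1 \<and> m_b A + m_t A = \<mu> \<and>
             m_b A = a_b A * nm \<and> m_t A = a_t A / nh \<and>
             equilibrium c F h \<mu> m A w r"
      using wge rge pb pt Fm0 Fh0 ab0 ab1 nm nh sum lt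
      by (simp add: A_def equilibrium_def feasible_def prof_s_def prof_a_def prof_b_def prof_t_def
           nm_def nh_def Fv_def Fm_def Fh_def)
    then show "\<exists>A. a_s A = 0 \<and> m_s A = 0 \<and> a_b A + a_t A = 1 \<and> m_b A + m_t A = \<mu> \<and>
             m_b A = a_b A * nn c F m \<and> m_t A = a_t A / nn c F h \<and>
             equilibrium c F h \<mu> m A
               (wbar_b c F h m - nn c F m * nn c F h * (wbar_b c F h m - wbar_t c F h m)
                                   / (nn c F m * nn c F h - 1))
               (F m + nn c F h * (wbar_b c F h m - wbar_t c F h m)
                                   / (nn c F m * nn c F h - 1))"
      by (auto simp: w_def r_def D_def nm_def nh_def wb_def wt_def Fm_def)
  qed
  have PC: "\<forall>m\<in>R_b c F h \<inter> (unitsq - K_set c F \<mu>) \<inter> (unitsq - R_m c F h).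
         equilibrium c F h \<mu> m
           \<lparr>a_s = 1 - \<mu> / nn c F m, a_b = \<mu> / nn c F m, a_t = 0, m_s = 0, m_b = \<mu>, m_t = 0\<rparr>
           (F h) (F (vmax m h) - F h / nn c F m)"
  proof
    fix m assume m: "m \<in> R_b c F h \<inter> (unitsq - K_set c F \<mu>) \<inter> (unitsq - R_m c F h)"
    have mu: "m \<in> unitsq" and lt: "F m < 1" using m Rb_lt1 by (auto simp: R_b_def)
    define nm where "nm = nn c F m"
    define nh where "nh = nn c F h"
    define wb where "wb = wbar_b c F h m"
    define wt where "wt = wbar_t c F h m"
    define Fm where "Fm = F m"
    define Fh where "Fh = F h"
    define Fv where "Fv = F (vmax m h)"
    have nm: "nm > 1" unfolding nm_def using nm1[OF mu lt] .
    have nh: "nh > 1" unfolding nh_def using nh1 .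
    have muK: "\<mu> < nm" using m mu lt by (auto simp: K_set_def nm_def)
    have wbd: "wb = nm * (Fv - Fm)" using lt by (simp add: wb_def wbar_b_def nm_def Fv_def Fm_def)
    have wtd: "wt = Fv - Fm / nh" by (simp add: wt_def wbar_t_def nh_def Fv_def Fm_def)
    have gt: "wb > Fh" using m by (auto simp: R_b_def wbar_s_def wb_def Fh_def)
    have Rm: "wb - Fh > nm * nh * (wt - Fh)"
      using m mu by (auto simp: R_m_def wbar_s_def wb_def wt_def Fh_def nm_def nh_def)
    define r where "r = Fv - Fh / nm"
    have rFm: "r - Fm = (wb - Fh) / nm" unfolding r_def using wbd nm by (simp add: field_simps)
    have "(wb - Fh) / nm > 0" using gt nm by simp
    then have rge: "r > Fm" using rFm by linarith
    have Fm0: "Fm \<ge> 0" using Fu[OF mu] Fm_def by simp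
    have pb: "nm * (Fv - r) - Fh = 0" unfolding r_def using nm by (simp add: field_simps)
    have "nm * Fv - Fh > nm * nh * (Fv - Fh)"
    proof -
      have e1: "nm * nh * (wt - Fh) = nm * nh * (Fv - Fh) - nm * Fm"
        using nh unfolding wtd by (simp add: field_simps)
      have e2: "wb = nm * Fv - nm * Fm" unfolding wbd by (simp add: algebra_simps)
      show ?thesis using Rm e1 e2 by linarith
    qed
    then have "(nm * Fv - Fh) / nm > (nm * nh * (Fv - Fh)) / nm" using nm
      by (intro divide_strict_right_mono) auto
    moreover have "(nm * Fv - Fh) / nm = Fv - Fh / nm" using nm by (simp add: field_simps)
    moreover have "(nm * nh * (Fv - Fh)) / nm = nh * (Fv - Fh)" using nm by simp
    ultimately have "Fv - Fh / nm > nh * (Fv - Fh)" by simp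
    then have pt: "nh * (Fv - Fh) - r \<le> 0" unfolding r_def by simp
    have "\<mu> / nm > 0" "\<mu> / nm < 1" using mu_pos nm muK by auto
    then show "equilibrium c F h \<mu> m
           \<lparr>a_s = 1 - \<mu> / nn c F m, a_b = \<mu> / nn c F m, a_t = 0, m_s = 0, m_b = \<mu>, m_t = 0\<rparr>
           (F h) (F (vmax m h) - F h / nn c F m)"
      using rge pb pt Fm0 Fh0 nm nh lt mu_pos
      by (simp add: equilibrium_def feasible_def prof_s_def prof_a_def prof_b_def prof_t_def
           nm_def nh_def Fv_def Fm_def Fh_def r_def)
  qed
  have EX: "\<forall>m\<in>unitsq. \<exists>A w r. equilibrium c F h \<mu> m A w r"
  proof
    fix m assume mu: "m \<in> unitsq"
    consider "m \<in> R_s c F h" | "m \<in> R_t c F h" | "m \<in> R_b c F h \<inter> K_set c F \<mu>"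
      | "m \<in> R_b c F h \<inter> (unitsq - K_set c F \<mu>) \<inter> R_m c F h"
      | "m \<in> R_b c F h \<inter> (unitsq - K_set c F \<mu>) \<inter> (unitsq - R_m c F h)"
      using mu by (auto simp: R_t_def)
    then show "\<exists>A w r. equilibrium c F h \<mu> m A w r"
    proof cases
      case 1 then show ?thesis using PS by blast
    next case 2 then show ?thesis using PT by blast
    next case 3 then show ?thesis using PB by blast
    next case 4 then show ?thesis using PM by blast
    next case 5 then show ?thesis using PC by blast
    qed
  qed
  have EF: "\<forall>m\<in>unitsq. \<forall>A w r. equilibrium c F h \<mu> m A w r \<longrightarrow>
         (\<forall>A'. feasible c F h \<mu> m A' \<longrightarrow> total_output c F h m A' \<le> total_output c F h m A)"
  proof (intro ballI allI impI)
    fix m A w r A' assume mu: "m \<in> unitsq" and e: "equilibrium c F h \<mu> m A w r"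
      and fe: "feasible c F h \<mu> m A'"
    have "total_output c F h m A' \<le> w + r * \<mu>"
      using e nh1 nm1[OF mu] by (intro output_le[OF fe]) (auto simp: equilibrium_def)
    also have "\<dots> = total_output c F h m A" using output_eq[OF e] nh1 by simp
    finally show "total_output c F h m A' \<le> total_output c F h m A" .
  qed
  show ?thesis using EX EF PS PB PT PM PC by blast
qed

end
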